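(* Let $G$ be a graph and $v$ a vertex of $G$. Then $v$ is always-activated if and only if $v$ is $\mathbf{c}_v$-always-activated, i.e. if and only if $v$ is fixed, $\mathbf{c}_v$ is solvable, and $\mathbf{p}(v)=1$ for every pattern $\mathbf{p}$ with $N(G)\mathbf{p}=\mathbf{c}_v$.
   Context: For a finite simple graph $G$ with vertex set $\{v_1,\dots,v_n\}$, the closed adjacency matrix $N(G)$ is the $n\times n$ matrix over $\mathbb{Z}_2$ whose $(i,j)$ entry is $1$ iff $i=j$ or $v_i$ is adjacent to $v_j$. Vectors in $\mathbb{Z}_2^{V(G)}$ are patterns/configurations; $\mathbf{p}$ solves $\mathbf{c}$ if $N(G)\mathbf{p}=\mathbf{c}$, and $\mathbf{c}$ is solvable if it has a solving pattern. Null patterns are elements of $\operatorname{Ker}(N(G))$. $\mathbf{1}$ is the all-ones configuration (always solvable); $\mathbf{c}_v$ is the configuration with $\mathbf{c}_v(x)=1$ iff $x=v$. A vertex $v$ is half-activated if $\boldsymbol{\ell}(v)=1$ for some null pattern $\boldsymbol{\ell}$, and fixed otherwise. A fixed vertex $v$ is always-activated if $\mathbf{p}(v)=1$ for every $\mathbf{p}$ with $N(G)\mathbf{p}=\mathbf{1}$. For a solvable configuration $\mathbf{c}$, a fixed vertex $v$ is $\mathbf{c}$-always-activated if $\mathbf{p}(v)=1$ for every $\mathbf{p}$ with $N(G)\mathbf{p}=\mathbf{c}$. *)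

theory Defs
  imports Main "HOL-Library.Z2"
begin

text \<open>Patterns/configurations are maps V -> Z_2
(type bit), represented as functions that vanish outside V.\<close>

definition simple_graph :: "'a set \<Rightarrow> ('a \<Rightarrow> 'a \<Rightarrow> bool) \<Rightarrow> bool" where
  "simple_graph V E \<longleftrightarrow> finite V \<and> (\<forall>x y. E x y \<longrightarrow> x \<in> V \<and> y \<in> V)
     \<and> (\<forall>x y. E x y \<longrightarrow> E y x) \<and> (\<forall>x. \<not> E x x)"

definition vec :: "'a set \<Rightarrow> ('a \<Rightarrow> bit) set" where
  "vec V = {p. \<forall>x. x \<notin> V \<longrightarrow> p x = 0}"

definition closedN :: "'a set \<Rightarrow> ('a \<Rightarrow> 'a \<Rightarrow> bool) \<Rightarrow> ('a \<Rightarrow> bit) \<Rightarrow> ('a \<Rightarrow> bit)" where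
  "closedN V E p = (\<lambda>x. if x \<in> V then (\<Sum>y\<in>{y\<in>V. x = y \<or> E x y}. p y) else 0)"

definition solves :: "'a set \<Rightarrow> ('a \<Rightarrow> 'a \<Rightarrow> bool) \<Rightarrow> ('a \<Rightarrow> bit) \<Rightarrow> ('a \<Rightarrow> bit) \<Rightarrow> bool" where
  "solves V E p c \<longleftrightarrow> p \<in> vec V \<and> closedN V E p = c"

definition solvable :: "'a set \<Rightarrow> ('a \<Rightarrow> 'a \<Rightarrow> bool) \<Rightarrow> ('a \<Rightarrow> bit) \<Rightarrow> bool" where
  "solvable V E c \<longleftrightarrow> (\<exists>p. solves V E p c)"

definition null_pattern :: "'a set \<Rightarrow> ('a \<Rightarrow> 'a \<Rightarrow> bool) \<Rightarrow> ('a \<Rightarrow> bit) \<Rightarrow> bool" where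
  "null_pattern V E l \<longleftrightarrow> solves V E l (\<lambda>_. 0)"

definition ones :: "'a set \<Rightarrow> 'a \<Rightarrow> bit" where
  "ones V = (\<lambda>x. if x \<in> V then 1 else 0)"

definition cvec :: "'a \<Rightarrow> 'a \<Rightarrow> bit" where
  "cvec v = (\<lambda>x. if x = v then 1 else 0)"

definition half_activated :: "'a set \<Rightarrow> ('a \<Rightarrow> 'a \<Rightarrow> bool) \<Rightarrow> 'a \<Rightarrow> bool" where
  "half_activated V E v \<longleftrightarrow> (\<exists>l. null_pattern V E l \<and> l v = 1)"

definition fixed_vertex :: "'a set \<Rightarrow> ('a \<Rightarrow> 'a \<Rightarrow> bool) \<Rightarrow> 'a \<Rightarrow> bool" where
  "fixed_vertex V E v \<longleftrightarrow> v \<in> V \<and> \<not> half_activated V E v"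

definition always_activated :: "'a set \<Rightarrow> ('a \<Rightarrow> 'a \<Rightarrow> bool) \<Rightarrow> 'a \<Rightarrow> bool" where
  "always_activated V E v \<longleftrightarrow> fixed_vertex V E v \<and>
     (\<forall>p. solves V E p (ones V) \<longrightarrow> p v = 1)"

definition c_always_activated ::
  "'a set \<Rightarrow> ('a \<Rightarrow> 'a \<Rightarrow> bool) \<Rightarrow> ('a \<Rightarrow> bit) \<Rightarrow> 'a \<Rightarrow> bool" where
  "c_always_activated V E c v \<longleftrightarrow> solvable V E c \<and> fixed_vertex V E v \<and>
     (\<forall>p. solves V E p c \<longrightarrow> p v = 1)"

end

theory Submission
  imports Defs
begin

lemma bit_cases2: "(x::bit) = 0 \<or> x = 1"
  by (metis bit_not_zero_iff)

lemma bit_add_self[simp]: "(x::bit) + x = 0"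
  using bit_cases2[of x] by auto

lemma bit_mult_self[simp]: "(x::bit) * x = x"
  using bit_cases2[of x] by auto

lemma ifmult: "(if P then (1::bit) else 0) * a = (if P then a else 0)"
  by simp

definition dotp :: "'a set \<Rightarrow> ('a \<Rightarrow> bit) \<Rightarrow> ('a \<Rightarrow> bit) \<Rightarrow> bit" where
  "dotp V a b = (\<Sum>x\<in>V. a x * b x)"

lemma sep:
  assumes "finite V" "finite I" "\<forall>i\<in>I. f i \<in> vec V" "c \<in> vec V"
    "\<forall>T\<subseteq>I. c \<noteq> (\<lambda>x. \<Sum>i\<in>T. f i x)"
  shows "\<exists>w\<in>vec V. (\<forall>i\<in>I. dotp V w (f i) = 0) \<and> dotp V w c = 1"
  using assms(2,3,4,5)
proof (induction I arbitrary: c rule: finite_induct)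
  case empty
  then have "c \<noteq> (\<lambda>x. 0)" by auto
  then obtain y where y: "c y \<noteq> 0" by (meson ext)
  with empty have yV: "y \<in> V" unfolding vec_def by auto
  have "dotp V (cvec y) c = 1"
    unfolding dotp_def cvec_def using y yV assms(1) by (simp add: ifmult sum.delta)
  moreover have "cvec y \<in> vec V" using yV unfolding vec_def cvec_def by auto
  ultimately show ?case by auto
next
  case (insert s I)
  have lin: "dotp V (\<lambda>x. a x + b x) d = dotp V a d + dotp V b d" for a b d
    unfolding dotp_def by (simp only: distrib_right sum.distrib)
  have lin2: "dotp V a (\<lambda>x. b x + d x) = dotp V a b + dotp V a d" for a b d
    unfolding dotp_def by (simp only: distrib_left sum.distrib)
  have "\<forall>T\<subseteq>I. c \<noteq> (\<lambda>x. \<Sum>i\<in>T. f i x)" using insert.prems(3) by auto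
  then obtain w where w: "w \<in> vec V" "\<forall>i\<in>I. dotp V w (f i) = 0" "dotp V w c = 1"
    using insert.IH[OF _ insert.prems(2)] insert.prems by blast
  have cs: "(\<lambda>x. c x + f s x) \<in> vec V" using insert.prems unfolding vec_def by auto
  have "\<forall>T\<subseteq>I. (\<lambda>x. c x + f s x) \<noteq> (\<lambda>x. \<Sum>i\<in>T. f i x)"
  proof (intro allI impI)
    fix T assume T: "T \<subseteq> I"
    show "(\<lambda>x. c x + f s x) \<noteq> (\<lambda>x. \<Sum>i\<in>T. f i x)"
    proof
      assume eq: "(\<lambda>x. c x + f s x) = (\<lambda>x. \<Sum>i\<in>T. f i x)"
      have fin: "finite T" using T insert.hyps(1) finite_subset by auto
      have sT: "s \<notin> T" using T insert.hyps(2) by auto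
      have "c = (\<lambda>x. \<Sum>i\<in>insert s T. f i x)"
      proof
        fix x
        have "c x + f s x = (\<Sum>i\<in>T. f i x)" using fun_cong[OF eq, of x] by simp
        then have "c x = (\<Sum>i\<in>T. f i x) + f s x"
          by (metis add.assoc add.right_neutral bit_add_self)
        then show "c x = (\<Sum>i\<in>insert s T. f i x)" using fin sT by (simp only: sum.insert[OF fin sT] add.commute)
      qed
      moreover have "insert s T \<subseteq> insert s I" using T by auto
      ultimately show False using insert.prems(3) by blast
    qed
  qed
  then obtain w' where w': "w' \<in> vec V" "\<forall>i\<in>I. dotp V w' (f i) = 0"
      "dotp V w' (\<lambda>x. c x + f s x) = 1"
    using insert.IH[OF _ cs] insert.prems by blast
  have w'': "dotp V w' c + dotp V w' (f s) = 1" using w'(3) lin2 by simp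
  show ?case
  proof (cases "dotp V w (f s) = 0")
    case True then show ?thesis using w by auto
  next
    case False
    then have ws: "dotp V w (f s) = 1" using bit_cases2 by auto
    show ?thesis
    proof (cases "dotp V w' (f s) = 0")
      case True
      then show ?thesis using w' w'' by auto
    next
      case False
      then have w's: "dotp V w' (f s) = 1" using bit_cases2 by auto
      then have w'c: "dotp V w' c = 0" using w'' by (metis add_cancel_left_left bit_add_self)
      have "(\<lambda>x. w x + w' x) \<in> vec V" using w w' unfolding vec_def by auto
      moreover have "\<forall>i\<in>insert s I. dotp V (\<lambda>x. w x + w' x) (f i) = 0"
        using w w' ws w's lin by auto
      moreover have "dotp V (\<lambda>x. w x + w' x) c = 1" using lin w w'c by simp
      ultimately show ?thesis by blast
    qed
  qed
qed

lemma ifm1: "(if P then a else 0) * (b::bit) = (if P then a*b else 0)" by simp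
lemma ifm2: "(b::bit) * (if P then a else 0) = (if P then b*a else 0)" by simp

lemma closedN_alt:
  assumes "finite V" "x \<in> V"
  shows "closedN V E p x = (\<Sum>y\<in>V. if x = y \<or> E x y then p y else 0)"
  using assms unfolding closedN_def by (simp add: sum.inter_filter)

lemma dot_sym:
  assumes "simple_graph V E"
  shows "dotp V (closedN V E p) q = dotp V p (closedN V E q)"
proof -
  have fin: "finite V" using assms unfolding simple_graph_def by auto
  have sy: "\<And>x y. E x y = E y x" using assms unfolding simple_graph_def by blast
  have "dotp V (closedN V E p) q = (\<Sum>x\<in>V. \<Sum>y\<in>V. if x = y \<or> E x y then p y * q x else 0)"
    unfolding dotp_def by (rule sum.cong) (simp_all only: closedN_alt[OF fin] sum_distrib_right ifm1)
  also have "\<dots> = (\<Sum>y\<in>V. \<Sum>x\<in>V. if x = y \<or> E x y then p y * q x else 0)"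
    by (rule sum.swap)
  also have "\<dots> = dotp V p (closedN V E q)"
    unfolding dotp_def by (rule sum.cong) (simp_all only: closedN_alt[OF fin] sum_distrib_left ifm2 sy eq_commute mult.commute)
  finally show ?thesis .
qed

lemma quad0:
  assumes "simple_graph V E" "finite F"
  shows "(\<Sum>x\<in>F. \<Sum>y\<in>F. if E x y then q x * q y else (0::bit)) = 0"
  using assms(2)
proof (induction F rule: finite_induct)
  case empty then show ?case by simp
next
  case (insert a F)
  have sy: "\<And>x y. E x y = E y x" and irr: "\<And>x. \<not> E x x"
    using assms unfolding simple_graph_def by blast+
  let ?g = "\<lambda>x y. if E x y then q x * q y else (0::bit)"
  have "(\<Sum>x\<in>insert a F. \<Sum>y\<in>insert a F. ?g x y)
      = ?g a a + (\<Sum>y\<in>F. ?g a y) + (\<Sum>x\<in>F. ?g x a) + (\<Sum>x\<in>F. \<Sum>y\<in>F. ?g x y)"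
    by (simp only: sum.insert[OF insert.hyps] sum.distrib add.assoc add.left_commute)
  also have "(\<Sum>x\<in>F. ?g x a) = (\<Sum>y\<in>F. ?g a y)"
    by (rule sum.cong) (auto simp: sy mult.commute)
  finally show ?case using insert.IH irr by simp
qed

lemma quad:
  assumes "simple_graph V E"
  shows "dotp V (closedN V E q) q = (\<Sum>x\<in>V. q x)"
proof -
  have fin: "finite V" using assms unfolding simple_graph_def by auto
  have irr: "\<And>x. \<not> E x x" using assms unfolding simple_graph_def by blast
  have "dotp V (closedN V E q) q = (\<Sum>x\<in>V. \<Sum>y\<in>V. (if x = y then q y * q x else 0) + (if E x y then q x * q y else 0))"
    unfolding dotp_def
    apply (rule sum.cong, simp)
    apply (simp only: closedN_alt[OF fin] sum_distrib_right ifm1)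
    apply (rule sum.cong, simp)
    using irr by (auto simp: mult.commute)
  also have "\<dots> = (\<Sum>x\<in>V. q x) + (\<Sum>x\<in>V. \<Sum>y\<in>V. if E x y then q x * q y else 0)"
    using fin by (simp only: sum.distrib) (simp add: sum.delta)
  finally show ?thesis using quad0[OF assms fin] by simp
qed

lemma dot_cvec1: "finite V \<Longrightarrow> x \<in> V \<Longrightarrow> dotp V h (cvec x) = h x"
  unfolding dotp_def cvec_def by (simp only: ifm2 mult_1_right sum.delta) simp

lemma dot_cvec2: "finite V \<Longrightarrow> x \<in> V \<Longrightarrow> dotp V (cvec x) h = h x"
  unfolding dotp_def cvec_def by (simp only: ifm1 mult_1_left sum.delta) simp

lemma dot_ones: "dotp V h (ones V) = (\<Sum>x\<in>V. h x)"
  unfolding dotp_def ones_def by (intro sum.cong refl) simp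

lemma closedN_vec: "closedN V E p \<in> vec V"
  unfolding closedN_def vec_def by simp

lemma lin_cols:
  assumes "simple_graph V E" "T \<subseteq> V"
  shows "closedN V E (\<lambda>z. if z \<in> T then 1 else 0) = (\<lambda>x. \<Sum>y\<in>T. closedN V E (cvec y) x)"
proof
  fix x
  have fin: "finite V" using assms unfolding simple_graph_def by auto
  have finT: "finite T" using assms(2) fin finite_subset by auto
  show "closedN V E (\<lambda>z. if z \<in> T then 1 else 0) x = (\<Sum>y\<in>T. closedN V E (cvec y) x)"
  proof (cases "x \<in> V")
    case False
    then show ?thesis unfolding closedN_def by simp
  next
    case True
    have "closedN V E (\<lambda>z. if z \<in> T then 1 else 0) x
        = (\<Sum>z\<in>V. if z \<in> T then (if x = z \<or> E x z then 1 else 0) else (0::bit))"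
      by (simp only: closedN_alt[OF fin True]) (rule sum.cong, auto)
    also have "\<dots> = (\<Sum>z\<in>V \<inter> T. (if x = z \<or> E x z then 1 else 0))"
      by (rule sum.inter_restrict[OF fin, symmetric])
    also have "\<dots> = (\<Sum>y\<in>T. closedN V E (cvec y) x)"
    proof -
      have "V \<inter> T = T" using assms(2) by auto
      moreover have "closedN V E (cvec y) x = (if x = y \<or> E x y then 1 else 0)" if "y \<in> T" for y
      proof -
        have yV: "y \<in> V" using that assms(2) by auto
        have "closedN V E (cvec y) x = (\<Sum>z\<in>V. if z = y then (if x = z \<or> E x z then 1 else 0) else (0::bit))"
          by (simp only: closedN_alt[OF fin True]) (rule sum.cong, auto simp: cvec_def)
        also have "\<dots> = (if x = y \<or> E x y then 1 else 0)"
          using yV by (simp only: sum.delta[OF fin]) simp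
        finally show ?thesis .
      qed
      ultimately show ?thesis by (simp cong: sum.cong)
    qed
    finally show ?thesis .
  qed
qed

lemma solv:
  assumes G: "simple_graph V E" and c: "c \<in> vec V"
    and orth: "\<forall>l. null_pattern V E l \<longrightarrow> dotp V l c = 0"
  shows "solvable V E c"
proof (rule ccontr)
  assume ns: "\<not> solvable V E c"
  have fin: "finite V" using G unfolding simple_graph_def by auto
  have "\<forall>T\<subseteq>V. c \<noteq> (\<lambda>x. \<Sum>y\<in>T. closedN V E (cvec y) x)"
  proof (intro allI impI)
    fix T assume T: "T \<subseteq> V"
    show "c \<noteq> (\<lambda>x. \<Sum>y\<in>T. closedN V E (cvec y) x)"
    proof
      assume "c = (\<lambda>x. \<Sum>y\<in>T. closedN V E (cvec y) x)"
      then have "solves V E (\<lambda>z. if z \<in> T then 1 else 0) c"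
        using lin_cols[OF G T] T unfolding solves_def vec_def by auto
      then show False using ns unfolding solvable_def by blast
    qed
  qed
  then obtain w where w: "w \<in> vec V" "\<forall>y\<in>V. dotp V w (closedN V E (cvec y)) = 0"
      "dotp V w c = 1"
    using sep[OF fin fin _ c, of "\<lambda>y. closedN V E (cvec y)"] closedN_vec by blast
  have "closedN V E w = (\<lambda>_. 0)"
  proof
    fix x show "closedN V E w x = 0"
    proof (cases "x \<in> V")
      case False then show ?thesis unfolding closedN_def by simp
    next
      case True
      have "closedN V E w x = dotp V (closedN V E w) (cvec x)" using dot_cvec1[OF fin True] by simp
      also have "\<dots> = dotp V w (closedN V E (cvec x))" by (rule dot_sym[OF G])
      finally show ?thesis using w True by simp
    qed
  qed
  then have "null_pattern V E w" using w unfolding null_pattern_def solves_def by simp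
  then show False using orth w by simp
qed

theorem proposition2p5:
  fixes V :: "'a set" and E :: "'a \<Rightarrow> 'a \<Rightarrow> bool" and v :: 'a
  assumes "simple_graph V E" and "v \<in> V"
  shows "always_activated V E v \<longleftrightarrow> c_always_activated V E (cvec v) v"
proof -
  note G = assms(1)
  have fin: "finite V" using G unfolding simple_graph_def by auto
  have key: "p v = q v" if p: "solves V E p (ones V)" and q: "solves V E q (cvec v)" for p q
  proof -
    have "p v = dotp V (cvec v) p" using dot_cvec2[OF fin assms(2)] by simp
    also have "\<dots> = dotp V (closedN V E q) p" using q unfolding solves_def by simp
    also have "\<dots> = dotp V q (closedN V E p)" by (rule dot_sym[OF G])
    also have "\<dots> = (\<Sum>x\<in>V. q x)" using p dot_ones unfolding solves_def by simp
    also have "\<dots> = dotp V (closedN V E q) q" using quad[OF G] by simp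
    also have "\<dots> = q v" using q dot_cvec2[OF fin assms(2)] unfolding solves_def by simp
    finally show ?thesis .
  qed
  have ones_solv: "solvable V E (ones V)"
  proof (rule solv[OF G])
    show "ones V \<in> vec V" unfolding ones_def vec_def by simp
    show "\<forall>l. null_pattern V E l \<longrightarrow> dotp V l (ones V) = 0"
    proof (intro allI impI)
      fix l assume l: "null_pattern V E l"
      have "dotp V l (ones V) = dotp V (closedN V E l) l" using dot_ones quad[OF G] by simp
      also have "\<dots> = 0" using l unfolding null_pattern_def solves_def dotp_def by simp
      finally show "dotp V l (ones V) = 0" .
    qed
  qed
  have cv_solv: "solvable V E (cvec v)" if fx: "fixed_vertex V E v"
  proof (rule solv[OF G])
    show "cvec v \<in> vec V" unfolding cvec_def vec_def using assms(2) by simp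
    show "\<forall>l. null_pattern V E l \<longrightarrow> dotp V l (cvec v) = 0"
    proof (intro allI impI)
      fix l assume l: "null_pattern V E l"
      then have "l v \<noteq> 1" using fx unfolding fixed_vertex_def half_activated_def by blast
      then show "dotp V l (cvec v) = 0" using dot_cvec1[OF fin assms(2)] bit_cases2 by metis
    qed
  qed
  show ?thesis
  proof
    assume a: "always_activated V E v"
    then have fx: "fixed_vertex V E v" unfolding always_activated_def by simp
    obtain p where p: "solves V E p (ones V)" using ones_solv unfolding solvable_def by blast
    have "p v = 1" using a p unfolding always_activated_def by blast
    then show "c_always_activated V E (cvec v) v"
      unfolding c_always_activated_def using fx cv_solv key p by metis
  next
    assume a: "c_always_activated V E (cvec v) v"
    then obtain q where q: "solves V E q (cvec v)" unfolding c_always_activated_def solvable_def by blast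
    have "q v = 1" using a q unfolding c_always_activated_def by blast
    then show "always_activated V E v"
      using a key q unfolding c_always_activated_def always_activated_def by metis
  qed
qed

end
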